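(* Let $n\ge 3$ and let $\Sigma$ be an $n\times n$ matrix with entries $\pm1$; let $\mu(\Sigma)$ denote the number of entries of $\Sigma$ equal to $-1$. (i) If $n=2m+1$ is odd and $\mu(\Sigma)\ge mn-(m-1)$, then there is a matrix $\Sigma'$ equivalent to $\Sigma$ with $\mu(\Sigma')<\mu(\Sigma)$. (ii) If $n=2m$ is even and $\mu(\Sigma)\ge mn-m$, then there is a matrix $\Sigma'$ equivalent to $\Sigma$ with $\mu(\Sigma')<\mu(\Sigma)$.
   Context: Two $r\times n$ matrices with entries $\pm1$ are equivalent if one is obtained from the other by a finite succession of the operations: interchanging two rows or two columns; negating a row or a column. *)

theory Defs
  imports Main
begin

text \<open>An r x n matrix is represented as a function nat => nat => int,
  with rows indexed by 0..<r and columns by 0..<n; entries outside that range are 0.\<close>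

definition pm1_matrix :: "nat \<Rightarrow> nat \<Rightarrow> (nat \<Rightarrow> nat \<Rightarrow> int) \<Rightarrow> bool" where
  "pm1_matrix r n M \<longleftrightarrow>
     (\<forall>i j. (i < r \<and> j < n \<longrightarrow> M i j = 1 \<or> M i j = -1) \<and>
            (\<not> (i < r \<and> j < n) \<longrightarrow> M i j = 0))"

definition swap_idx :: "nat \<Rightarrow> nat \<Rightarrow> nat \<Rightarrow> nat" where
  "swap_idx a b x = (if x = a then b else if x = b then a else x)"

definition swap_rows :: "nat \<Rightarrow> nat \<Rightarrow> (nat \<Rightarrow> nat \<Rightarrow> int) \<Rightarrow> (nat \<Rightarrow> nat \<Rightarrow> int)" where
  "swap_rows a b M = (\<lambda>i j. M (swap_idx a b i) j)"

definition swap_cols :: "nat \<Rightarrow> nat \<Rightarrow> (nat \<Rightarrow> nat \<Rightarrow> int) \<Rightarrow> (nat \<Rightarrow> nat \<Rightarrow> int)" where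
  "swap_cols a b M = (\<lambda>i j. M i (swap_idx a b j))"

definition neg_row :: "nat \<Rightarrow> (nat \<Rightarrow> nat \<Rightarrow> int) \<Rightarrow> (nat \<Rightarrow> nat \<Rightarrow> int)" where
  "neg_row a M = (\<lambda>i j. if i = a then - M i j else M i j)"

definition neg_col :: "nat \<Rightarrow> (nat \<Rightarrow> nat \<Rightarrow> int) \<Rightarrow> (nat \<Rightarrow> nat \<Rightarrow> int)" where
  "neg_col a M = (\<lambda>i j. if j = a then - M i j else M i j)"

inductive elem_op :: "nat \<Rightarrow> nat \<Rightarrow> (nat \<Rightarrow> nat \<Rightarrow> int) \<Rightarrow> (nat \<Rightarrow> nat \<Rightarrow> int) \<Rightarrow> bool"
  for r n where
  "a < r \<Longrightarrow> b < r \<Longrightarrow> elem_op r n M (swap_rows a b M)"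
| "a < n \<Longrightarrow> b < n \<Longrightarrow> elem_op r n M (swap_cols a b M)"
| "a < r \<Longrightarrow> elem_op r n M (neg_row a M)"
| "a < n \<Longrightarrow> elem_op r n M (neg_col a M)"

definition pm1_equiv :: "nat \<Rightarrow> nat \<Rightarrow> (nat \<Rightarrow> nat \<Rightarrow> int) \<Rightarrow> (nat \<Rightarrow> nat \<Rightarrow> int) \<Rightarrow> bool" where
  "pm1_equiv r n M M' \<longleftrightarrow> (elem_op r n)\<^sup>*\<^sup>* M M'"

definition mu :: "nat \<Rightarrow> nat \<Rightarrow> (nat \<Rightarrow> nat \<Rightarrow> int) \<Rightarrow> nat" where
  "mu r n M = card {(i, j). i < r \<and> j < n \<and> M i j = -1}"

end

theory Submission
  imports Defs
begin

definition rs :: "nat \<Rightarrow> (nat \<Rightarrow> nat \<Rightarrow> int) \<Rightarrow> nat \<Rightarrow> int" where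
  "rs n M i = (\<Sum>j<n. M i j)"
definition cs :: "nat \<Rightarrow> (nat \<Rightarrow> nat \<Rightarrow> int) \<Rightarrow> nat \<Rightarrow> int" where
  "cs n M j = (\<Sum>i<n. M i j)"
definition tot :: "nat \<Rightarrow> (nat \<Rightarrow> nat \<Rightarrow> int) \<Rightarrow> int" where
  "tot n M = (\<Sum>i<n. rs n M i)"

lemma pm_sum:
  "(\<forall>k<n. f k = 1 \<or> f k = -1) \<Longrightarrow>
   (\<Sum>k<n. f k) = int n - 2 * int (card {k. k<n \<and> f k = -1})"
proof (induction n)
  case 0 then show ?case by simp
next
  case (Suc n)
  have e: "{k. k<Suc n \<and> f k = -1} = (if f n = -1 then insert n {k. k<n \<and> f k = -1} else {k. k<n \<and> f k = -1})"
    by (auto simp: less_Suc_eq)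
  have "n \<notin> {k. k<n \<and> f k = -1}" by simp
  then show ?case using Suc e by (auto simp: card_insert_if)
qed

lemma pm_sum2:
  "(\<forall>k<n. f k = 1 \<or> f k = -1) \<Longrightarrow>
   (\<Sum>k<n. f k) = 2 * int (card {k. k<n \<and> f k = 1}) - int n"
proof (induction n)
  case 0 then show ?case by simp
next
  case (Suc n)
  have e: "{k. k<Suc n \<and> f k = 1} = (if f n = 1 then insert n {k. k<n \<and> f k = 1} else {k. k<n \<and> f k = 1})"
    by (auto simp: less_Suc_eq)
  then show ?case using Suc by (auto simp: card_insert_if)
qed

lemma thresh:
  "(\<forall>k<(n::nat). f k \<ge> (0::int)) \<Longrightarrow> 0 \<le> t \<Longrightarrow>
   t * int (card {k. k<n \<and> f k \<ge> t}) \<le> (\<Sum>k<n. f k)"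
proof (induction n)
  case 0 then show ?case by simp
next
  case (Suc n)
  have e: "{k. k<Suc n \<and> f k \<ge> t} = (if f n \<ge> t then insert n {k. k<n \<and> f k \<ge> t} else {k. k<n \<and> f k \<ge> t})"
    by (auto simp: less_Suc_eq)
  have "t * int (card {k. k<n \<and> f k \<ge> t}) \<le> (\<Sum>k<n. f k)" using Suc by auto
  moreover have "f n \<ge> 0" using Suc by auto
  ultimately show ?case using e by (auto simp: card_insert_if algebra_simps)
qed

lemma flipsum: "(a::nat) < n \<Longrightarrow> (\<Sum>i<n. if i = a then - x i else x i) = (\<Sum>i<n. x i) - 2 * (x a :: int)"
proof -
  assume a: "a < n"
  have "(\<Sum>i<n. if i = a then - x i else x i) = (\<Sum>i<n. x i - (if i = a then 2 * x i else 0))"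
    by (rule sum.cong) auto
  also have "\<dots> = (\<Sum>i<n. x i) - 2 * x a" using a by (simp add: sum_subtractf)
  finally show ?thesis .
qed

lemma tot_neg_row: "a < n \<Longrightarrow> tot n (neg_row a M) = tot n M - 2 * rs n M a"
proof -
  assume a: "a<n"
  have "tot n (neg_row a M) = (\<Sum>i<n. if i = a then - rs n M i else rs n M i)"
    unfolding tot_def rs_def neg_row_def by (rule sum.cong) (auto simp: sum_negf)
  then show ?thesis using flipsum[OF a] unfolding tot_def by simp
qed

lemma rs_neg_row: "i \<noteq> a \<Longrightarrow> rs n (neg_row a M) i = rs n M i"
  unfolding rs_def neg_row_def by simp

lemma rs_neg_col: "a < n \<Longrightarrow> rs n (neg_col a M) i = rs n M i - 2 * M i a"
  unfolding rs_def neg_col_def using flipsum[of a n "\<lambda>j. M i j"] by simp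

lemma tot_neg_col: "a < n \<Longrightarrow> tot n (neg_col a M) = tot n M - 2 * cs n M a"
proof -
  assume a: "a<n"
  have "tot n (neg_col a M) = (\<Sum>i<n. rs n M i - 2 * M i a)"
    unfolding tot_def using rs_neg_col[OF a] by simp
  then show ?thesis unfolding tot_def cs_def by (simp add: sum_subtractf sum_distrib_left)
qed

lemma pm1_neg_row: "pm1_matrix n n M \<Longrightarrow> pm1_matrix n n (neg_row a M)"
  unfolding pm1_matrix_def neg_row_def by (metis equation_minus_iff minus_equation_iff neg_equal_0_iff_equal)
lemma pm1_neg_col: "pm1_matrix n n M \<Longrightarrow> pm1_matrix n n (neg_col a M)"
  unfolding pm1_matrix_def neg_col_def by (metis equation_minus_iff minus_equation_iff neg_equal_0_iff_equal)

lemma mu_tot: assumes "pm1_matrix n n M"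
  shows "2 * int (mu n n M) = int n * int n - tot n M"
proof -
  have s: "{(i, j). i < n \<and> j < n \<and> M i j = -1} = Sigma {..<n} (\<lambda>i. {j. j<n \<and> M i j = -1})"
    by auto
  have m: "mu n n M = (\<Sum>i<n. card {j. j<n \<and> M i j = -1})"
    unfolding mu_def s by (subst card_SigmaI) auto
  have r: "\<And>i. i<n \<Longrightarrow> rs n M i = int n - 2 * int (card {j. j<n \<and> M i j = -1})"
    unfolding rs_def using assms unfolding pm1_matrix_def by (intro pm_sum) auto
  have "tot n M = (\<Sum>i<n. int n - 2 * int (card {j. j<n \<and> M i j = -1}))"
    unfolding tot_def using r by simp
  also have "\<dots> = int n * int n - 2 * int (mu n n M)"
    unfolding m by (simp add: sum_subtractf sum_distrib_left)
  finally show ?thesis by simp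
qed


lemma step: "elem_op n n M M' \<Longrightarrow> pm1_equiv n n M M'"
  unfolding pm1_equiv_def by auto

lemma equiv_trans: "pm1_equiv n n A B \<Longrightarrow> pm1_equiv n n B C \<Longrightarrow> pm1_equiv n n A C"
  unfolding pm1_equiv_def by auto

lemma improve_c:
  assumes pm: "pm1_matrix n n S" and i: "i<n" and j: "j<n" and s: "S i j = 1"
    and lt: "rs n S i + cs n S j < 2"
  shows "\<exists>S'. pm1_equiv n n S S' \<and> mu n n S' < mu n n S"
proof -
  define N1 where "N1 = neg_col j S"
  define N2 where "N2 = neg_row i N1"
  have e: "pm1_equiv n n S N2" unfolding N2_def N1_def
    using equiv_trans step elem_op.intros(3,4) i j by metis
  have t: "tot n N2 = tot n S - 2 * cs n S j - 2 * (rs n S i - 2 * S i j)"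
    unfolding N2_def N1_def using tot_neg_row[OF i] tot_neg_col[OF j] rs_neg_col[OF j] by simp
  have p2: "pm1_matrix n n N2" unfolding N2_def N1_def using pm pm1_neg_row pm1_neg_col by blast
  have "int (mu n n N2) < int (mu n n S)" using mu_tot[OF pm] mu_tot[OF p2] t lt unfolding s by (smt (verit))
  then show ?thesis using e by auto
qed

lemma improve_d:
  assumes pm: "pm1_matrix n n S" and i1: "i1<n" and i2: "i2<n" and j: "j<n" and ne: "i1 \<noteq> i2"
    and s1: "S i1 j = 1" and s2: "S i2 j = 1"
    and lt: "cs n S j + rs n S i1 + rs n S i2 < 4"
  shows "\<exists>S'. pm1_equiv n n S S' \<and> mu n n S' < mu n n S"
proof -
  define N1 where "N1 = neg_col j S"
  define N2 where "N2 = neg_row i1 N1"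
  define N3 where "N3 = neg_row i2 N2"
  have e: "pm1_equiv n n S N3" unfolding N3_def N2_def N1_def
    using equiv_trans step elem_op.intros(3,4) i1 i2 j by metis
  have t: "tot n N3 = tot n S - 2 * cs n S j - 2 * (rs n S i1 - 2 * S i1 j) - 2 * (rs n S i2 - 2 * S i2 j)"
    unfolding N3_def N2_def N1_def using tot_neg_row[OF i1] tot_neg_row[OF i2] tot_neg_col[OF j] rs_neg_col[OF j]
      rs_neg_row[of i2 i1] ne by simp
  have p3: "pm1_matrix n n N3" unfolding N3_def N2_def N1_def using pm pm1_neg_row pm1_neg_col by blast
  have "int (mu n n N3) < int (mu n n S)" using mu_tot[OF pm] mu_tot[OF p3] t lt unfolding s1 s2 by (smt (verit))
  then show ?thesis using e by auto
qed

lemma improve_a: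
  assumes pm: "pm1_matrix n n S" and i: "i<n" and lt: "rs n S i < 0"
  shows "\<exists>S'. pm1_equiv n n S S' \<and> mu n n S' < mu n n S"
proof -
  have e: "pm1_equiv n n S (neg_row i S)" using step elem_op.intros(3) i by metis
  have p2: "pm1_matrix n n (neg_row i S)" using pm pm1_neg_row by blast
  have "int (mu n n (neg_row i S)) < int (mu n n S)" using mu_tot[OF pm] mu_tot[OF p2] tot_neg_row[OF i, of S] lt by linarith
  then show ?thesis using e by auto
qed

lemma improve_b:
  assumes pm: "pm1_matrix n n S" and j: "j<n" and lt: "cs n S j < 0"
  shows "\<exists>S'. pm1_equiv n n S S' \<and> mu n n S' < mu n n S"
proof -
  have e: "pm1_equiv n n S (neg_col j S)" using step elem_op.intros(4) j by metis
  have p2: "pm1_matrix n n (neg_col j S)" using pm pm1_neg_col by blast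
  have "int (mu n n (neg_col j S)) < int (mu n n S)" using mu_tot[OF pm] mu_tot[OF p2] tot_neg_col[OF j, of S] lt by linarith
  then show ?thesis using e by auto
qed

lemma rs_card: "pm1_matrix n n S \<Longrightarrow> i < n \<Longrightarrow> rs n S i = int n - 2 * int (card {j. j<n \<and> S i j = -1})"
  unfolding rs_def pm1_matrix_def by (intro pm_sum) auto
lemma cs_card: "pm1_matrix n n S \<Longrightarrow> j < n \<Longrightarrow> cs n S j = int n - 2 * int (card {i. i<n \<and> S i j = -1})"
  unfolding cs_def pm1_matrix_def by (intro pm_sum) auto
lemma cs_card2: "pm1_matrix n n S \<Longrightarrow> j < n \<Longrightarrow> cs n S j = 2 * int (card {i. i<n \<and> S i j = 1}) - int n"
  unfolding cs_def pm1_matrix_def by (intro pm_sum2) auto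
lemma rs_card2: "pm1_matrix n n S \<Longrightarrow> i < n \<Longrightarrow> rs n S i = 2 * int (card {j. j<n \<and> S i j = 1}) - int n"
  unfolding rs_def pm1_matrix_def by (intro pm_sum2) auto
lemma tot_cs: "tot n M = (\<Sum>j<n. cs n M j)"
  unfolding tot_def rs_def cs_def by (rule sum.swap)


lemma card_split: "card {i. i<(n::nat) \<and> P i} + card {i. i<n \<and> \<not> P i} = n"
proof (induction n)
  case 0 then show ?case by simp
next
  case (Suc n)
  have e1: "{i. i<Suc n \<and> P i} = (if P n then insert n {i. i<n \<and> P i} else {i. i<n \<and> P i})"
    by (auto simp: less_Suc_eq)
  have e2: "{i. i<Suc n \<and> \<not> P i} = (if \<not> P n then insert n {i. i<n \<and> \<not> P i} else {i. i<n \<and> \<not> P i})"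
    by (auto simp: less_Suc_eq)
  show ?case using Suc e1 e2 by (auto simp: card_insert_if)
qed

lemma two_elems: assumes "finite A" "card A \<ge> 2" obtains a b where "a \<in> A" "b \<in> A" "a \<noteq> b"
proof -
  from assms have "A \<noteq> {}" by auto
  then obtain a where a: "a \<in> A" by auto
  have "card (A - {a}) \<ge> 1" using assms a by (simp add: card_Diff_singleton)
  then have "A - {a} \<noteq> {}" by (metis card.empty not_one_le_zero)
  then obtain b where "b \<in> A - {a}" by auto
  then show ?thesis using a that by auto
qed

lemma par_odd: "x = int n - 2 * (c::int) \<Longrightarrow> n = 2*m+1 \<Longrightarrow> 0 \<le> x \<Longrightarrow> x < 3 \<Longrightarrow> x = 1" by presburger
lemma par_odd1: "x = int n - 2 * (c::int) \<Longrightarrow> n = 2*m+1 \<Longrightarrow> 0 \<le> x \<Longrightarrow> 1 \<le> x" by presburger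
lemma par_even: "x = int n - 2 * (c::int) \<Longrightarrow> n = 2*m \<Longrightarrow> 0 \<le> x \<Longrightarrow> x < 2 \<Longrightarrow> x = 0" by presburger
lemma par_even2: "x = int n - 2 * (c::int) \<Longrightarrow> n = 2*m \<Longrightarrow> 2 \<le> x \<Longrightarrow> x < 4 \<Longrightarrow> x = 2" by presburger

lemma odd_case:
  assumes n3: "n \<ge> 3" and pm: "pm1_matrix n n S" and nm: "n = 2 * m + 1"
    and mu: "mu n n S \<ge> m * n - (m - 1)"
  shows "\<exists>S'. pm1_equiv n n S S' \<and> mu n n S' < mu n n S"
proof (cases "(\<exists>i<n. rs n S i < 0) \<or> (\<exists>j<n. cs n S j < 0)")
  case True
  then show ?thesis using improve_a[OF pm] improve_b[OF pm] by blast
next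
  case False
  then have rpos: "\<And>i. i<n \<Longrightarrow> rs n S i \<ge> 0" and cpos: "\<And>j. j<n \<Longrightarrow> cs n S j \<ge> 0" by auto
  have m1: "m \<ge> 1" using n3 nm by auto
  have "int (m * n - (m - 1)) = int m * int n - int m + 1" using m1 nm by (simp add: of_nat_diff algebra_simps)
  moreover have "int (m * n - (m - 1)) \<le> int (mu n n S)" using mu by (simp only: of_nat_le_iff)
  ultimately have "2 * int (mu n n S) \<ge> 2 * (int m * int n - int m + 1)" by (metis mult_left_mono zero_le_numeral)
  moreover have "int n * int n = 2 * int m * int n + int n" using nm by (simp add: algebra_simps)
  ultimately have T: "tot n S \<le> 2 * int n - 3" using mu_tot[OF pm] nm by simp
  have "\<exists>j<n. cs n S j < 3"
  proof (rule ccontr)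
    assume "\<not> ?thesis"
    then have "(\<Sum>j<n. (3::int)) \<le> (\<Sum>j<n. cs n S j)" by (intro sum_mono) auto
    then show False using T tot_cs[of n S] by simp
  qed
  then obtain j where j: "j<n" "cs n S j < 3" by auto
  have cj: "cs n S j = 1" by (rule par_odd[OF cs_card[OF pm j(1)] nm cpos[OF j(1)] j(2)])
  define P where "P = {i. i<n \<and> S i j = 1}"
  have cP: "int (card P) = int m + 1" using cs_card2[OF pm j(1)] cj nm unfolding P_def by simp
  define B where "B = {i. i<n \<and> rs n S i - 1 \<ge> 2}"
  have "2 * int (card B) \<le> (\<Sum>i<n. rs n S i - 1)" unfolding B_def
  proof (rule thresh)
    show "\<forall>k<n. 0 \<le> rs n S k - 1"
    proof (intro allI impI)
      fix k assume k: "k<n"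
      show "0 \<le> rs n S k - 1" using par_odd1[OF rs_card[OF pm k] nm rpos[OF k]] by simp
    qed
  qed simp
  also have "\<dots> = tot n S - int n" unfolding tot_def by (simp add: sum_subtractf)
  finally have cB: "int (card B) \<le> int m - 1" using T nm by simp
  have fP: "finite P" unfolding P_def by simp
  have "card P - card B \<le> card (P - B)" by (rule diff_card_le_card_Diff) (simp add: B_def)
  then have "card (P - B) \<ge> 2" using cP cB by linarith
  then obtain i1 i2 where i: "i1 \<in> P - B" "i2 \<in> P - B" "i1 \<noteq> i2"
    using two_elems[of "P - B"] fP by blast
  have r1: "rs n S i1 = 1"
    using i(1) par_odd[OF rs_card[OF pm, of i1] nm rpos[of i1]] unfolding P_def B_def by auto
  have r2: "rs n S i2 = 1"
    using i(2) par_odd[OF rs_card[OF pm, of i2] nm rpos[of i2]] unfolding P_def B_def by auto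
  show ?thesis
    by (rule improve_d[OF pm, of i1 i2 j]) (use i j r1 r2 cj in \<open>auto simp: P_def\<close>)
qed


lemma even_case:
  assumes n3: "n \<ge> 3" and pm: "pm1_matrix n n S" and nm: "n = 2 * m"
    and mu: "mu n n S \<ge> m * n - m"
  shows "\<exists>S'. pm1_equiv n n S S' \<and> mu n n S' < mu n n S"
proof (cases "(\<exists>i<n. rs n S i < 0) \<or> (\<exists>j<n. cs n S j < 0) \<or>
              (\<exists>i<n. \<exists>j<n. S i j = 1 \<and> rs n S i + cs n S j < 2)")
  case True
  then show ?thesis using improve_a[OF pm] improve_b[OF pm] improve_c[OF pm] by blast
next
  case False
  have rpos: "\<And>i. i<n \<Longrightarrow> rs n S i \<ge> 0" using False by (meson not_less)
  have cpos: "\<And>j. j<n \<Longrightarrow> cs n S j \<ge> 0" using False by (meson not_less)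
  have noc: "\<And>i j. i<n \<Longrightarrow> j<n \<Longrightarrow> S i j = 1 \<Longrightarrow> rs n S i + cs n S j \<ge> 2" using False by (meson not_less)
  have m2: "m \<ge> 2" using n3 nm by auto
  have "int (m * n - m) = int m * int n - int m" using m2 nm by (simp add: of_nat_diff algebra_simps)
  moreover have "int (m * n - m) \<le> int (mu n n S)" using mu by (simp only: of_nat_le_iff)
  ultimately have "2 * int (mu n n S) \<ge> 2 * (int m * int n - int m)" by (metis mult_left_mono zero_le_numeral)
  moreover have "int n * int n = 2 * int m * int n" using nm by (simp add: algebra_simps)
  ultimately have T: "tot n S \<le> int n" using mu_tot[OF pm] nm by simp
  define R1 where "R1 = {i. i<n \<and> rs n S i \<ge> 2}"
  define R0 where "R0 = {i. i<n \<and> \<not> rs n S i \<ge> 2}"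
  have "2 * int (card R1) \<le> tot n S" unfolding R1_def tot_def by (rule thresh) (auto simp: rpos)
  then have "card R1 \<le> m" using T nm by simp
  moreover have "card R0 + card R1 = n" using card_split[of n "\<lambda>i. \<not> rs n S i \<ge> 2"] unfolding R0_def R1_def by simp
  ultimately have cR0: "card R0 \<ge> 2" using nm m2 by linarith
  then obtain i0 i1 where i: "i0 \<in> R0" "i1 \<in> R0" "i0 \<noteq> i1"
    using two_elems[of R0] unfolding R0_def by auto
  have r0: "rs n S i0 = 0" using i(1) par_even[OF rs_card[OF pm, of i0] nm rpos[of i0]] unfolding R0_def by auto
  have r1: "rs n S i1 = 0" using i(2) par_even[OF rs_card[OF pm, of i1] nm rpos[of i1]] unfolding R0_def by auto
  have i0n: "i0 < n" and i1n: "i1 < n" using i unfolding R0_def by auto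
  define C1 where "C1 = {j. j<n \<and> cs n S j \<ge> 2}"
  define C0 where "C0 = {j. j<n \<and> \<not> cs n S j \<ge> 2}"
  have "2 * int (card C1) \<le> tot n S" unfolding C1_def tot_cs by (rule thresh) (auto simp: cpos)
  then have cC1: "card C1 \<le> m" using T nm by simp
  have split: "card C0 + card C1 = n" using card_split[of n "\<lambda>j. \<not> cs n S j \<ge> 2"] unfolding C0_def C1_def by simp
  have cC0: "card C0 \<ge> m" using split cC1 nm by linarith
  have C0eq: "C0 = {j. j<n \<and> S i j = -1}" if ii: "i < n" "rs n S i = 0" for i
  proof (rule card_subset_eq)
    show "finite {j. j<n \<and> S i j = -1}" by simp
    show sub: "C0 \<subseteq> {j. j<n \<and> S i j = -1}"
    proof
      fix j assume "j \<in> C0"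
      then have j: "j<n" "cs n S j < 2" unfolding C0_def by auto
      have "S i j \<noteq> 1" using noc[OF ii(1) j(1)] ii(2) j(2) by auto
      then show "j \<in> {j. j<n \<and> S i j = -1}" using pm j(1) ii(1) unfolding pm1_matrix_def by auto
    qed
    have "int (card {j. j<n \<and> S i j = -1}) = int m" using rs_card[OF pm ii(1)] ii(2) nm by simp
    then have "card {j. j<n \<and> S i j = -1} = m" by simp
    moreover have "card C0 \<le> card {j. j<n \<and> S i j = -1}" by (rule card_mono) (simp, rule sub)
    ultimately show "card C0 = card {j. j<n \<and> S i j = -1}" using cC0 by simp
  qed
  have "int (card {j. j<n \<and> S i0 j = 1}) = int m" using rs_card2[OF pm i0n] r0 nm by simp
  then have "{j. j<n \<and> S i0 j = 1} \<noteq> {}" using m2 by (metis card.empty of_nat_eq_iff not_numeral_le_zero)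
  then obtain j where j: "j<n" "S i0 j = 1" by auto
  have jC0: "j \<notin> C0" using C0eq[OF i0n r0] j by auto
  then have cj2: "cs n S j \<ge> 2" using j unfolding C0_def by auto
  have s1: "S i1 j = 1" using jC0 C0eq[OF i1n r1] j(1) pm i1n unfolding pm1_matrix_def by auto
  have cj: "cs n S j < 4"
  proof (rule ccontr)
    assume "\<not> cs n S j < 4"
    then have c4: "cs n S j \<ge> 4" by simp
    define f where "f k = cs n S k - (if k = j then 2 else 0)" for k
    have "2 * int (card {k. k<n \<and> f k \<ge> 2}) \<le> (\<Sum>k<n. f k)"
      by (rule thresh) (use c4 in \<open>auto simp: f_def cpos\<close>)
    also have "\<dots> = tot n S - 2" unfolding f_def tot_cs using j(1) by (simp add: sum_subtractf)
    finally have A: "2 * int (card {k. k<n \<and> f k \<ge> 2}) \<le> tot n S - 2" .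
    have "C1 \<subseteq> {k. k<n \<and> f k \<ge> 2}" unfolding C1_def f_def using c4 by auto
    then have "card C1 \<le> card {k. k<n \<and> f k \<ge> 2}" by (intro card_mono) auto
    moreover have "card C1 \<ge> m" using split cC0 nm
    proof -
      have "card C0 \<le> m" using C0eq[OF i0n r0] rs_card[OF pm i0n] r0 nm by simp
      then show ?thesis using split nm by linarith
    qed
    ultimately show False using A T nm by linarith
  qed
  have cj': "cs n S j = 2" by (rule par_even2[OF cs_card[OF pm j(1)] nm cj2 cj])
  show ?thesis
    by (rule improve_d[OF pm i0n i1n j(1) i(3) j(2) s1]) (simp add: cj' r0 r1)
qed

theorem proposition3p4:
  fixes n :: nat and S :: "nat \<Rightarrow> nat \<Rightarrow> int"
  assumes "n \<ge> 3" and "pm1_matrix n n S"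
  shows "(\<forall>m. n = 2 * m + 1 \<and> mu n n S \<ge> m * n - (m - 1) \<longrightarrow>
            (\<exists>S'. pm1_equiv n n S S' \<and> mu n n S' < mu n n S))
       \<and> (\<forall>m. n = 2 * m \<and> mu n n S \<ge> m * n - m \<longrightarrow>
            (\<exists>S'. pm1_equiv n n S S' \<and> mu n n S' < mu n n S))"
  using odd_case[OF assms] even_case[OF assms] by blast

end
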